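(* Let $(f,g),(f',g')\in\Theta$ both be in general position, with representation dimension $m$ and $k\ge m+1$ labels. Let $C=\sqrt{2m/(k-1)}$, and let $\sigma_{\min}$ and $\sigma_{\max}$ be respectively the smallest and the largest singular value among all matrices $\tilde L_{\mathcal J}$ of the model $(f,g)$ (over all pivots $\tilde y$ and all $m$-subsets $\mathcal J\subseteq\mathcal Y\setminus\{\tilde y\}$). Then $$C\,\frac{d_{\mathrm{logit}}(p_{f,g},p_{f',g'})}{\sigma_{\max}}\ \le\ d_{\mathrm{rep}}((f,g),(f',g'))\ \le\ C\,\frac{d_{\mathrm{logit}}(p_{f,g},p_{f',g'})}{\sigma_{\min}}.$$
   Context: Model class $\Theta$: pairs $(f,g)$, $f:\mathcal X\to\mathbb R^m$, $g:\mathcal Y\to\mathbb R^m$, $\mathcal Y$ a finite set of $k$ labels, $\sum_y g(y)=0$, inducing $p_{f,g}(y\mid x)\propto\exp(f(x)^\top g(y))$; $p_x$ is the data distribution. Logits $u(x)=(f(x)^\top g(y))_{y\in\mathcal Y}$, $d_{\mathrm{logit}}^2=\mathbb E_{x\sim p_x}\|u(x)-u'(x)\|_2^2$. For a pivot $\tilde y\in\mathcal Y$ set $\tilde g(y)=g(y)-g(\tilde y)$, and for $\mathcal J=\{y_1,\dots,y_m\}\subseteq\mathcal Y\setminus\{\tilde y\}$ let $\tilde L_{\mathcal J}=(\tilde g(y_1)\ \cdots\ \tilde g(y_m))\in\mathbb R^{m\times m}$ (similarly $\tilde L'_{\mathcal J}$ from $g'$). A model is in general position if $\tilde L_{\mathcal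 J}$ is invertible for every pivot $\tilde y$ and every $m$-subset $\mathcal J\subseteq\mathcal Y\setminus\{\tilde y\}$, and $\mathrm{span}\{f(x):x\in\mathrm{supp}(p_x)\}=\mathbb R^m$. Put $\tilde A_{\mathcal J}=\tilde L_{\mathcal J}^{-\top}\tilde L_{\mathcal J}'^{\top}$ and $J=\binom{k-1}{m}$. The linear identifiability dissimilarity is $$d_{\mathrm{rep}}^2((f,g),(f',g'))=\frac{1}{kJ}\sum_{\tilde y\in\mathcal Y}\ \sum_{\mathcal J\subseteq\mathcal Y\setminus\{\tilde y\},\,|\mathcal J|=m}\mathbb E_{x\sim p_x}\|f(x)-\tilde A_{\mathcal J}f'(x)\|_2^2.$$ *)

theory Defs
  imports "HOL-Probability.Probability"
begin

text \<open>Representation space: real^'m (m = CARD('m)); labels: finite type 'y (k = CARD('y)).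
 A model is a pair (f,g) with f :: 'x => real^'m and g :: 'y => real^'m.\<close>

definition in_Theta :: "('y::finite \<Rightarrow> real^'m) \<Rightarrow> bool" where
  "in_Theta g \<longleftrightarrow> (\<Sum>y\<in>UNIV. g y) = 0"

definition logits :: "('x \<Rightarrow> real^'m) \<Rightarrow> ('y::finite \<Rightarrow> real^'m) \<Rightarrow> 'x \<Rightarrow> real^'y" where
  "logits f g x = (\<chi> y. f x \<bullet> g y)"

definition d_logit_sq :: "'x measure \<Rightarrow> ('x \<Rightarrow> real^'m) \<Rightarrow> ('y::finite \<Rightarrow> real^'m)
    \<Rightarrow> ('x \<Rightarrow> real^'m) \<Rightarrow> ('y \<Rightarrow> real^'m) \<Rightarrow> real" where
  "d_logit_sq M f g f' g' = (\<integral>x. (norm (logits f g x - logits f' g' x))\<^sup>2 \<partial>M)"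

definition subsets_J :: "'y::finite \<Rightarrow> 'm::finite itself \<Rightarrow> 'y set set" where
  "subsets_J yt _ = {J. J \<subseteq> UNIV - {yt} \<and> card J = CARD('m)}"

text \<open>A fixed enumeration J = {y_1,...,y_m} of an m-subset (indexed by 'm).
 The same enumeration is used for both models.\<close>
definition enum_J :: "'y set \<Rightarrow> 'm::finite \<Rightarrow> 'y" where
  "enum_J J = (SOME e. bij_betw e (UNIV :: 'm set) J)"

definition Ltil :: "('y \<Rightarrow> real^'m::finite) \<Rightarrow> 'y \<Rightarrow> 'y set \<Rightarrow> real^'m^'m" where
  "Ltil g yt J = (\<chi> i j. (g (enum_J J j) - g yt) $ i)"

definition Atil :: "('y \<Rightarrow> real^'m::finite) \<Rightarrow> ('y \<Rightarrow> real^'m) \<Rightarrow> 'y \<Rightarrow> 'y set \<Rightarrow> real^'m^'m" where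
  "Atil g g' yt J = matrix_inv (transpose (Ltil g yt J)) ** transpose (Ltil g' yt J)"

definition d_rep_sq :: "'x measure \<Rightarrow> ('x \<Rightarrow> real^'m::finite) \<Rightarrow> ('y::finite \<Rightarrow> real^'m)
    \<Rightarrow> ('x \<Rightarrow> real^'m) \<Rightarrow> ('y \<Rightarrow> real^'m) \<Rightarrow> real" where
  "d_rep_sq M f g f' g' =
     (1 / (real CARD('y) * real ((CARD('y) - 1) choose CARD('m)))) *
     (\<Sum>yt\<in>UNIV. \<Sum>J\<in>subsets_J yt TYPE('m).
        \<integral>x. (norm (f x - Atil g g' yt J *v f' x))\<^sup>2 \<partial>M)"

definition measure_support :: "'x::topological_space measure \<Rightarrow> 'x set" where
  "measure_support M = {x. \<forall>U. open U \<and> x \<in> U \<longrightarrow> emeasure M U \<noteq> 0}"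

definition general_position :: "'x::topological_space measure \<Rightarrow> ('x \<Rightarrow> real^'m::finite)
    \<Rightarrow> ('y::finite \<Rightarrow> real^'m) \<Rightarrow> bool" where
  "general_position M f g \<longleftrightarrow>
     (\<forall>yt. \<forall>J\<in>subsets_J yt TYPE('m). invertible (Ltil g yt J)) \<and>
     span (f ` measure_support M) = UNIV"

definition singular_values :: "real^'n^'n \<Rightarrow> real set" where
  "singular_values A = {sqrt lam | lam. \<exists>v. v \<noteq> 0 \<and> (transpose A ** A) *v v = lam *s v}"

definition all_singular_values :: "('y::finite \<Rightarrow> real^'m::finite) \<Rightarrow> real set" where
  "all_singular_values g = (\<Union>yt. \<Union>J\<in>subsets_J yt TYPE('m). singular_values (Ltil g yt J))"

end

theory Submission
  imports Defs
begin


lemma sym_dot: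
  fixes T :: "real^'n^'n"
  assumes "transpose T = T"
  shows "u \<bullet> (T *v v) = v \<bullet> (T *v u)"
proof -
  have "u \<bullet> (T *v v) = (u v* T) \<bullet> v" by (simp add: dot_lmul_matrix)
  also have "\<dots> = (transpose T *v u) \<bullet> v" by (simp add: transpose_matrix_vector)
  also have "\<dots> = v \<bullet> (T *v u)" using assms by (simp add: inner_commute)
  finally show ?thesis .
qed

lemma psd_zero:
  fixes T :: "real^'n^'n"
  assumes sym: "transpose T = T" and psd: "\<And>v. 0 \<le> v \<bullet> (T *v v)"
    and z: "z \<bullet> (T *v z) = 0"
  shows "T *v z = 0"
proof (rule ccontr)
  assume ne: "T *v z \<noteq> 0"
  define h where "h = T *v z"
  define a where "a = h \<bullet> h"
  define b where "b = h \<bullet> (T *v h)"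
  have a: "a > 0" using ne unfolding a_def h_def by simp
  have b: "b \<ge> 0" unfolding b_def by (rule psd)
  define t where "t = - (a / (b + 1))"
  have "0 \<le> (z + t *\<^sub>R h) \<bullet> (T *v (z + t *\<^sub>R h))" by (rule psd)
  also have "\<dots> = z \<bullet> (T *v z) + t * (z \<bullet> (T *v h)) + t * (h \<bullet> (T *v z)) + t * t * b"
    unfolding b_def
    by (simp add: matrix_vector_right_distrib inner_add_left inner_add_right
        scaleR_matrix_vector_assoc[symmetric] algebra_simps)
  also have "\<dots> = 2 * t * a + t * t * b"
    using z sym_dot[OF sym, of z h] unfolding a_def h_def by simp
  finally have "0 \<le> 2 * t * a + t * t * b" .
  moreover have "2 * t * a + t * t * b < 0"
  proof -
    define c where "c = a / (b+1)"
    have e: "c > 0" using a b unfolding c_def by simp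
    have "c * b < 2 * a"
    proof -
      have "c * b = a * (b / (b+1))" unfolding c_def by simp
      also have "\<dots> < a * 2" using a b by (intro mult_strict_left_mono) (auto simp: divide_simps)
      finally show ?thesis by simp
    qed
    then have "c * (c * b - 2 * a) < 0" using e
      by (intro mult_pos_neg) auto
    moreover have "t = - c" unfolding t_def c_def by simp
    ultimately show ?thesis by (simp add: algebra_simps)
  qed
  ultimately show False by simp
qed

lemma rayleigh_max:
  fixes S :: "real^'n^'n"
  assumes sym: "transpose S = S"
  shows "\<exists>z lam. z \<noteq> 0 \<and> S *v z = lam *s z \<and> (\<forall>v. v \<bullet> (S *v v) \<le> lam * (v \<bullet> v))"
proof -
  let ?q = "\<lambda>v. v \<bullet> (S *v v)"
  have cont: "continuous_on (sphere 0 1) ?q"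
    by (intro continuous_intros linear_continuous_on matrix_vector_mul_bounded_linear)
  have ne: "sphere (0::real^'n) 1 \<noteq> {}"
    using vector_choose_size[of 1] by (auto simp: dist_norm)
  obtain z where zs: "z \<in> sphere 0 1" and zmax: "\<And>y. y \<in> sphere 0 1 \<Longrightarrow> ?q y \<le> ?q z"
    using continuous_attains_sup[OF compact_sphere ne cont] by blast
  define lam where "lam = ?q z"
  have nz: "norm z = 1" using zs by simp
  have bound: "?q v \<le> lam * (v \<bullet> v)" for v
  proof (cases "v = 0")
    case True then show ?thesis by simp
  next
    case False
    define u where "u = (1 / norm v) *\<^sub>R v"
    have "u \<in> sphere 0 1" using False unfolding u_def by simp
    then have "?q u \<le> lam" using zmax unfolding lam_def by blast
    moreover have "?q u = ?q v / (norm v)^2"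
      unfolding u_def by (simp add: matrix_vector_mult_scaleR power2_eq_square)
    moreover have "v \<bullet> v = (norm v)^2" by (simp add: power2_norm_eq_inner)
    ultimately show ?thesis using False by (simp add: divide_le_eq mult.commute)
  qed
  define T where "T = lam *\<^sub>R mat 1 - S"
  have Tv: "T *v v = lam *\<^sub>R v - S *v v" for v
    unfolding T_def by (simp add: matrix_vector_mult_diff_rdistrib scaleR_matrix_vector_assoc[symmetric])
  have symT: "transpose T = T"
  proof -
    have "S $ j $ i = S $ i $ j" for i j
      using arg_cong[OF sym, of "\<lambda>M. M $ i $ j"] by (simp add: transpose_def)
    then show ?thesis unfolding T_def by (simp add: vec_eq_iff transpose_def mat_def)
  qed
  have psd: "0 \<le> v \<bullet> (T *v v)" for v
    using bound[of v] by (simp add: Tv inner_diff_right)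
  have zz: "z \<bullet> (T *v z) = 0"
    using nz by (simp add: Tv inner_diff_right lam_def power2_norm_eq_inner[symmetric])
  have "T *v z = 0" by (rule psd_zero[OF symT psd zz])
  then have "S *v z = lam *s z" by (simp add: Tv vec_eq_iff)
  moreover have "z \<noteq> 0" using nz by auto
  ultimately show ?thesis using bound by blast
qed

lemma sym_LLt: "transpose (L ** transpose L) = (L::real^'n^'n) ** transpose L"
  by (simp add: matrix_transpose_mul)

lemma quad_LLt:
  fixes L :: "real^'n^'n" and v :: "real^'n"
  shows "v \<bullet> ((L ** transpose L) *v v) = (norm (transpose L *v v))^2"
proof -
  have "v \<bullet> ((L ** transpose L) *v v) = v \<bullet> (L *v (transpose L *v v))"
    by (simp only: matrix_vector_mul_assoc)
  also have "\<dots> = (v v* L) \<bullet> (transpose L *v v)" using dot_lmul_matrix[of v L "transpose L *v v"] by simp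
  also have "\<dots> = (transpose L *v v) \<bullet> (transpose L *v v)" by (simp add: transpose_matrix_vector)
  finally show ?thesis by (simp add: power2_norm_eq_inner)
qed

lemma eig_transfer:
  fixes L :: "real^'n^'n"
  assumes inv: "invertible L" and z: "z \<noteq> 0" and e: "(L ** transpose L) *v z = lam *s z"
  shows "sqrt lam \<in> singular_values L" and "lam \<ge> 0"
proof -
  have "inj ((*v) (transpose L))" using inj_matrix_vector_mult[OF transpose_invertible[OF inv]] .
  then have nz: "transpose L *v z \<noteq> 0" using z
    by (metis injD matrix_vector_mult_0_right)
  have "(transpose L ** L) *v (transpose L *v z) = transpose L *v ((L ** transpose L) *v z)"
    by (simp only: matrix_vector_mul_assoc matrix_mul_assoc)
  also have "\<dots> = lam *s (transpose L *v z)" using e by (simp add: vector_scalar_commute)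
  finally show "sqrt lam \<in> singular_values L" unfolding singular_values_def using nz by blast
  have "z \<bullet> ((L ** transpose L) *v z) = lam * (z \<bullet> z)" using e
    by (simp add: inner_vec_def sum_distrib_left algebra_simps)
  moreover have "z \<bullet> ((L ** transpose L) *v z) \<ge> 0" unfolding quad_LLt by simp
  ultimately have "lam * (z \<bullet> z) \<ge> 0" by simp
  moreover have "z \<bullet> z > 0" using z by simp
  ultimately show "lam \<ge> 0" by (simp add: zero_le_mult_iff)
qed

lemma sv_bounds:
  fixes L :: "real^'n^'n"
  assumes inv: "invertible L"
  shows "\<exists>a\<in>singular_values L. \<exists>b\<in>singular_values L. \<forall>v.
     a^2 * (norm v)^2 \<le> (norm (transpose L *v v))^2 \<and> (norm (transpose L *v v))^2 \<le> b^2 * (norm v)^2"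
proof -
  let ?S = "L ** transpose L"
  obtain z lam where z: "z \<noteq> 0" "?S *v z = lam *s z" and bd: "\<forall>v. v \<bullet> (?S *v v) \<le> lam * (v \<bullet> v)"
    using rayleigh_max[OF sym_LLt] by blast
  have symN: "transpose (- ?S) = - ?S" using sym_LLt[of L]
    by (simp add: vec_eq_iff transpose_def)
  obtain z' mu where z': "z' \<noteq> 0" "(- ?S) *v z' = mu *s z'" and bd': "\<forall>v. v \<bullet> ((- ?S) *v v) \<le> mu * (v \<bullet> v)"
    using rayleigh_max[OF symN] by blast
  have negS: "(- ?S) *v v = - (?S *v v)" for v by (simp add: vec_eq_iff matrix_vector_mult_def sum_negf)
  have "- (?S *v z') = mu *s z'" using z'(2) negS by simp
  then have "?S *v z' = - (mu *s z')" by (metis minus_minus)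
  then have e': "?S *v z' = (- mu) *s z'" by (simp add: vec_eq_iff)
  have a: "sqrt (-mu) \<in> singular_values L" "-mu \<ge> 0" using eig_transfer[OF inv z'(1) e'] by auto
  have b: "sqrt lam \<in> singular_values L" "lam \<ge> 0" using eig_transfer[OF inv z] by auto
  have A: "(sqrt (-mu))^2 * (norm v)^2 \<le> (norm (transpose L *v v))^2" for v
      using bd'[rule_format, of v] a(2) quad_LLt[of v L]
      by (simp add: negS power2_norm_eq_inner)
  have B: "(norm (transpose L *v v))^2 \<le> (sqrt lam)^2 * (norm v)^2" for v
      using bd[rule_format, of v] b(2) quad_LLt[of v L]
      by (simp add: power2_norm_eq_inner)
  show ?thesis using A B a(1) b(1) by blast
qed

lemma sv_pos:
  fixes L :: "real^'n^'n"
  assumes inv: "invertible L" and s: "s \<in> singular_values L"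
  shows "s > 0"
proof -
  obtain lam v where s: "s = sqrt lam" and v: "v \<noteq> 0" "(transpose L ** L) *v v = lam *s v"
    using s unfolding singular_values_def by blast
  have "L *v v \<noteq> 0" using inj_matrix_vector_mult[OF inv] v(1)
    by (metis injD matrix_vector_mult_0_right)
  have "v \<bullet> ((transpose L ** L) *v v) = (norm (L *v v))^2"
    using quad_LLt[of v "transpose L"] by simp
  moreover have "v \<bullet> ((transpose L ** L) *v v) = lam * (v \<bullet> v)" using v(2)
    by (simp add: inner_vec_def sum_distrib_left algebra_simps)
  ultimately have "lam * (v \<bullet> v) > 0" using \<open>L *v v \<noteq> 0\<close> by simp
  moreover have "v \<bullet> v > 0" using v by simp
  ultimately have "lam > 0" by (simp add: zero_less_mult_iff)
  then show ?thesis using s by simp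
qed

lemma sv_finite:
  fixes L :: "real^'n^'n"
  shows "finite (singular_values L)"
proof -
  let ?M = "transpose L ** L"
  define E where "E = {lam. \<exists>v. v \<noteq> 0 \<and> ?M *v v = lam *s v}"
  have symM: "transpose ?M = ?M" by (simp add: matrix_transpose_mul)
  define ev where "ev lam = (SOME v. v \<noteq> 0 \<and> ?M *v v = lam *s v)" for lam
  have ev: "ev lam \<noteq> 0 \<and> ?M *v ev lam = lam *s ev lam" if "lam \<in> E" for lam
    using that unfolding E_def ev_def by (metis (mono_tags, lifting) mem_Collect_eq someI_ex)
  have inj: "inj_on ev E"
  proof (rule inj_onI)
    fix l1 l2 assume "l1 \<in> E" "l2 \<in> E" "ev l1 = ev l2"
    then have "l1 *s ev l1 = l2 *s ev l1" "ev l1 \<noteq> 0" using ev by metis+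
    then show "l1 = l2" by (metis vector_mul_rcancel)
  qed
  have orth: "pairwise orthogonal (ev ` E)"
  proof (clarsimp simp: pairwise_def)
    fix l1 l2 assume l: "l1 \<in> E" "l2 \<in> E" "ev l1 \<noteq> ev l2"
    then have ne: "l1 \<noteq> l2" by auto
    have "ev l1 \<bullet> (?M *v ev l2) = ev l2 \<bullet> (?M *v ev l1)" by (rule sym_dot[OF symM])
    then have "l2 * (ev l1 \<bullet> ev l2) = l1 * (ev l1 \<bullet> ev l2)"
      using ev[OF l(1)] ev[OF l(2)]
      by (simp add: inner_vec_def sum_distrib_left algebra_simps)
    then show "orthogonal (ev l1) (ev l2)" using ne by (simp add: orthogonal_def)
  qed
  have "0 \<notin> ev ` E" using ev by auto
  then have "finite (ev ` E)" using orth pairwise_orthogonal_independent finiteI_independent by blast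
  then have "finite E" using inj finite_imageD by blast
  moreover have "singular_values L = sqrt ` E" unfolding singular_values_def E_def by blast
  ultimately show ?thesis by simp
qed

lemma count_subsets:
  assumes A: "finite A" and y: "y \<in> A" and m: "m \<ge> 1"
  shows "card {J. J \<subseteq> A \<and> card J = m \<and> y \<in> J} = (card A - 1) choose (m - 1)"
proof -
  have "bij_betw (insert y) {K. K \<subseteq> A - {y} \<and> card K = m - 1} {J. J \<subseteq> A \<and> card J = m \<and> y \<in> J}"
  proof (rule bij_betwI[where g = "\<lambda>J. J - {y}"])
    show "insert y \<in> {K. K \<subseteq> A - {y} \<and> card K = m - 1} \<rightarrow> {J. J \<subseteq> A \<and> card J = m \<and> y \<in> J}"
    proof
      fix K assume K: "K \<in> {K. K \<subseteq> A - {y} \<and> card K = m - 1}"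
      then have "finite K" using A finite_subset by blast
      moreover have "y \<notin> K" using K by auto
      ultimately show "insert y K \<in> {J. J \<subseteq> A \<and> card J = m \<and> y \<in> J}" using K y m by auto
    qed
    show "(\<lambda>J. J - {y}) \<in> {J. J \<subseteq> A \<and> card J = m \<and> y \<in> J} \<rightarrow> {K. K \<subseteq> A - {y} \<and> card K = m - 1}"
    proof
      fix J assume J: "J \<in> {J. J \<subseteq> A \<and> card J = m \<and> y \<in> J}"
      then have "finite J" using A finite_subset by blast
      with J show "J - {y} \<in> {K. K \<subseteq> A - {y} \<and> card K = m - 1}" by auto
    qed
  qed auto
  then have "card {J. J \<subseteq> A \<and> card J = m \<and> y \<in> J} = card {K. K \<subseteq> A - {y} \<and> card K = m - 1}"
    by (simp add: bij_betw_same_card)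
  also have "\<dots> = card (A - {y}) choose (m - 1)" using A by (simp add: n_subsets)
  finally show ?thesis using A y by simp
qed

lemma sum_swap_sets:
  fixes h :: "'a \<Rightarrow> real"
  assumes A: "finite A" and F: "finite F" and sub: "\<And>J. J \<in> F \<Longrightarrow> J \<subseteq> A"
  shows "(\<Sum>J\<in>F. \<Sum>y\<in>J. h y) = (\<Sum>y\<in>A. h y * card {J\<in>F. y \<in> J})"
proof -
  have "(\<Sum>J\<in>F. \<Sum>y\<in>J. h y) = (\<Sum>J\<in>F. \<Sum>y\<in>A. if y \<in> J then h y else 0)"
  proof (rule sum.cong[OF refl])
    fix J assume "J \<in> F"
    then have "J \<subseteq> A" by (rule sub)
    then show "(\<Sum>y\<in>J. h y) = (\<Sum>y\<in>A. if y \<in> J then h y else 0)"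
      using A by (simp add: sum.If_cases Int_absorb1)
  qed
  also have "\<dots> = (\<Sum>y\<in>A. \<Sum>J\<in>F. if y \<in> J then h y else 0)" by (rule sum.swap)
  also have "\<dots> = (\<Sum>y\<in>A. h y * card {J\<in>F. y \<in> J})"
    using F by (simp add: sum.If_cases Int_def mult.commute)
  finally show ?thesis .
qed

lemma enum_J_bij:
  assumes "J \<in> subsets_J yt TYPE('m::finite)"
  shows "bij_betw (enum_J J :: 'm \<Rightarrow> 'y::finite) UNIV J"
proof -
  have "card J = card (UNIV :: 'm set)" using assms unfolding subsets_J_def by simp
  then have "\<exists>e. bij_betw (e :: 'm \<Rightarrow> 'y) UNIV J" using finite_same_card_bij[of "UNIV :: 'm set" J] by (metis finite)
  then show ?thesis unfolding enum_J_def by (rule someI_ex)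
qed

lemma comb:
  fixes d :: "'y::finite \<Rightarrow> real"
  assumes s: "(\<Sum>y\<in>UNIV. d y) = 0" and k: "CARD('y) \<ge> CARD('m::finite) + 1"
  shows "(\<Sum>yt\<in>UNIV. \<Sum>J\<in>subsets_J yt TYPE('m). \<Sum>j\<in>(UNIV::'m set). (d (enum_J J j) - d yt)^2)
     = 2 * real CARD('y) * real ((CARD('y) - 2) choose (CARD('m) - 1)) * (\<Sum>y\<in>UNIV. (d y)^2)"
proof -
  let ?c = "real ((CARD('y) - 2) choose (CARD('m) - 1))"
  have inner: "(\<Sum>J\<in>subsets_J yt TYPE('m). \<Sum>j\<in>(UNIV::'m set). (d (enum_J J j) - d yt)^2)
      = ?c * (\<Sum>y\<in>UNIV. (d y - d yt)^2)" for yt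
  proof -
    have "(\<Sum>J\<in>subsets_J yt TYPE('m). \<Sum>j\<in>(UNIV::'m set). (d (enum_J J j) - d yt)^2)
        = (\<Sum>J\<in>subsets_J yt TYPE('m). \<Sum>y\<in>J. (d y - d yt)^2)"
    proof (rule sum.cong[OF refl])
      fix J assume "J \<in> subsets_J yt TYPE('m)"
      from enum_J_bij[OF this] show "(\<Sum>j\<in>(UNIV::'m set). (d (enum_J J j) - d yt)^2) = (\<Sum>y\<in>J. (d y - d yt)^2)"
        by (rule sum.reindex_bij_betw)
    qed
    also have "\<dots> = (\<Sum>y\<in>UNIV - {yt}. (d y - d yt)^2 * card {J\<in>subsets_J yt TYPE('m). y \<in> J})"
      by (rule sum_swap_sets) (auto simp: subsets_J_def)
    also have "\<dots> = (\<Sum>y\<in>UNIV - {yt}. (d y - d yt)^2 * ?c)"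
    proof (rule sum.cong[OF refl])
      fix y assume y: "y \<in> UNIV - {yt}"
      have "{J\<in>subsets_J yt TYPE('m). y \<in> J} = {J. J \<subseteq> UNIV - {yt} \<and> card J = CARD('m) \<and> y \<in> J}"
        unfolding subsets_J_def by auto
      also have "card \<dots> = (card (UNIV - {yt} :: 'y set) - 1) choose (CARD('m) - 1)"
        by (rule count_subsets) (use y in auto)
      also have "card (UNIV - {yt} :: 'y set) - 1 = CARD('y) - 2"
        by (simp add: card_Diff_singleton)
      finally show "(d y - d yt)^2 * card {J\<in>subsets_J yt TYPE('m). y \<in> J} = (d y - d yt)^2 * ?c"
        by simp
    qed
    also have "\<dots> = ?c * (\<Sum>y\<in>UNIV. (d y - d yt)^2)"
    proof -
      have "(\<Sum>y\<in>UNIV. (d y - d yt)^2) = (\<Sum>y\<in>UNIV - {yt}. (d y - d yt)^2)"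
        by (rule sum.mono_neutral_right) auto
      then show ?thesis by (simp add: sum_distrib_left mult.commute)
    qed
    finally show ?thesis .
  qed
  have "(\<Sum>yt\<in>UNIV. \<Sum>y\<in>UNIV. (d y - d yt)^2)
      = (\<Sum>yt\<in>UNIV. \<Sum>y\<in>UNIV. (d y)^2 + (d yt)^2 - 2 * d yt * d y)"
    by (simp add: power2_diff algebra_simps)
  also have "\<dots> = (\<Sum>yt\<in>UNIV. (\<Sum>y\<in>UNIV. (d y)^2) + real CARD('y) * (d yt)^2)"
  proof (rule sum.cong[OF refl])
    fix yt
    have "(\<Sum>y\<in>UNIV. (d y)^2 + (d yt)^2 - 2 * d yt * d y)
        = (\<Sum>y\<in>UNIV. (d y)^2) + (\<Sum>y\<in>(UNIV::'y set). (d yt)^2) - (\<Sum>y\<in>UNIV. 2 * d yt * d y)"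
      by (simp only: sum.distrib sum_subtractf)
    also have "(\<Sum>y\<in>UNIV. 2 * d yt * d y) = 2 * d yt * (\<Sum>y\<in>UNIV. d y)"
      by (simp only: sum_distrib_left)
    finally show "(\<Sum>y\<in>UNIV. (d y)^2 + (d yt)^2 - 2 * d yt * d y) = (\<Sum>y\<in>UNIV. (d y)^2) + real CARD('y) * (d yt)^2"
      using s by simp
  qed
  also have "\<dots> = 2 * real CARD('y) * (\<Sum>y\<in>UNIV. (d y)^2)"
    by (simp only: sum.distrib sum_distrib_left[symmetric]) simp
  finally have "(\<Sum>yt\<in>UNIV. \<Sum>y\<in>UNIV. (d y - d yt)^2) = 2 * real CARD('y) * (\<Sum>y\<in>UNIV. (d y)^2)" .
  then show ?thesis by (simp add: inner sum_distrib_left[symmetric])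
qed

lemma Lt_apply:
  "(transpose (Ltil g yt J) *v v) $ j = v \<bullet> g (enum_J J j) - v \<bullet> g yt"
  by (simp add: matrix_vector_mult_def transpose_def Ltil_def inner_vec_def
      sum_subtractf algebra_simps)

lemma inv_right:
  fixes M :: "real^'n^'n"
  assumes "invertible M" shows "M ** matrix_inv M = mat 1"
  using assms unfolding invertible_def matrix_inv_def by (rule someI_ex[THEN conjunct1])

lemma w_formula:
  fixes g g' :: "'y \<Rightarrow> real^'m::finite"
  assumes inv: "invertible (Ltil g yt J)"
  shows "(transpose (Ltil g yt J) *v (a - Atil g g' yt J *v b)) $ j
     = (a \<bullet> g (enum_J J j) - b \<bullet> g' (enum_J J j)) - (a \<bullet> g yt - b \<bullet> g' yt)"
proof -
  have "transpose (Ltil g yt J) *v (Atil g g' yt J *v b) = transpose (Ltil g' yt J) *v b"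
    unfolding Atil_def
    using inv_right[OF transpose_invertible[OF inv]]
    by (metis matrix_mul_assoc matrix_mul_lid matrix_vector_mul_assoc)
  then have "transpose (Ltil g yt J) *v (a - Atil g g' yt J *v b)
      = transpose (Ltil g yt J) *v a - transpose (Ltil g' yt J) *v b"
    by (simp add: matrix_vector_mult_diff_distrib)
  then show ?thesis by (simp only: vector_minus_component Lt_apply)
qed

lemma meas_mat:
  fixes A :: "real^'n^'m"
  assumes "h \<in> borel_measurable M"
  shows "(\<lambda>x. A *v h x) \<in> borel_measurable M"
  by (rule borel_measurable_continuous_on[OF _ assms])
     (intro linear_continuous_on matrix_vector_mul_bounded_linear)

lemma norm2_vec: "(norm (v::real^'n))^2 = (\<Sum>i\<in>UNIV. (v $ i)^2)"
  unfolding power2_norm_eq_inner by (simp add: inner_vec_def power2_eq_square)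



theorem mainTheorem5:
  fixes px :: "'x::topological_space measure"
    and f f' :: "'x \<Rightarrow> real^'m::finite"
    and g g' :: "'y::finite \<Rightarrow> real^'m"
  assumes "prob_space px" and "sets px = sets borel"
    and "f \<in> borel_measurable px" and "f' \<in> borel_measurable px"
    and "integrable px (\<lambda>x. (norm (f x))\<^sup>2)" and "integrable px (\<lambda>x. (norm (f' x))\<^sup>2)"
    and "in_Theta g" and "in_Theta g'"
    and "general_position px f g" and "general_position px f' g'"
    and "CARD('y) \<ge> CARD('m) + 1"
  shows "sqrt (2 * real CARD('m) / (real CARD('y) - 1)) * sqrt (d_logit_sq px f g f' g')
           / Max (all_singular_values g) \<le> sqrt (d_rep_sq px f g f' g')
       \<and> sqrt (d_rep_sq px f g f' g') \<le>
         sqrt (2 * real CARD('m) / (real CARD('y) - 1)) * sqrt (d_logit_sq px f g f' g')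
           / Min (all_singular_values g)"
proof -
  note fm = assms(3) and f'm = assms(4) and fi = assms(5) and f'i = assms(6)
  note kge = assms(11)
  have inv: "invertible (Ltil g yt J)" if "J \<in> subsets_J yt TYPE('m)" for yt J
    using assms(9) that unfolding general_position_def by blast
  let ?SV = "all_singular_values g"
  define smin where "smin = Min ?SV"
  define smax where "smax = Max ?SV"
  have finSV: "finite ?SV"
    unfolding all_singular_values_def by (intro finite_UN_I finite sv_finite)
  define yt0 where "yt0 = (undefined :: 'y)"
  have "CARD('m) \<le> card (UNIV - {yt0} :: 'y set)" using kge by (simp add: card_Diff_singleton)
  then obtain J0 where J0: "J0 \<subseteq> UNIV - {yt0}" "card J0 = CARD('m)"
    using obtain_subset_with_card_n by metis
  then have J0s: "J0 \<in> subsets_J yt0 TYPE('m)" unfolding subsets_J_def by simp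
  obtain a0 where "a0 \<in> singular_values (Ltil g yt0 J0)"
    using sv_bounds[OF inv[OF J0s]] by blast
  then have neSV: "?SV \<noteq> {}" unfolding all_singular_values_def using J0s by blast
  have posSV: "s > 0" if "s \<in> ?SV" for s
    using that sv_pos inv unfolding all_singular_values_def by blast
  have sminpos: "smin > 0" unfolding smin_def using finSV neSV posSV by simp
  have sminmax: "smin \<le> smax" unfolding smin_def smax_def using finSV neSV by (meson Max_ge Min_le ex_in_conv order_trans)
  have bounds: "smin^2 * (norm v)^2 \<le> (norm (transpose (Ltil g yt J) *v v))^2
      \<and> (norm (transpose (Ltil g yt J) *v v))^2 \<le> smax^2 * (norm v)^2"
    if J: "J \<in> subsets_J yt TYPE('m)" for yt J v
  proof -
    obtain a b where ab: "a \<in> singular_values (Ltil g yt J)" "b \<in> singular_values (Ltil g yt J)"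
      and bd: "\<forall>v. a^2 * (norm v)^2 \<le> (norm (transpose (Ltil g yt J) *v v))^2
           \<and> (norm (transpose (Ltil g yt J) *v v))^2 \<le> b^2 * (norm v)^2"
      using sv_bounds[OF inv[OF J]] by blast
    have aS: "a \<in> ?SV" and bS: "b \<in> ?SV" using ab J unfolding all_singular_values_def by blast+
    then have "smin \<le> a" "b \<le> smax" unfolding smin_def smax_def using finSV by auto
    then have "smin^2 \<le> a^2" "b^2 \<le> smax^2" using sminpos posSV[OF bS] by (auto intro!: power_mono)
    then have "smin^2 * (norm v)^2 \<le> a^2 * (norm v)^2" "b^2 * (norm v)^2 \<le> smax^2 * (norm v)^2"
      by (auto intro!: mult_right_mono)
    then show ?thesis using bd by (meson order_trans)
  qed

  define del where "del x = logits f g x - logits f' g' x" for x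
  define zf where "zf yt J x = f x - Atil g g' yt J *v f' x" for yt J x
  define W where "W yt J x = (norm (transpose (Ltil g yt J) *v zf yt J x))^2" for yt J x
  define Z where "Z yt J x = (norm (zf yt J x))^2" for yt J x
  define k where "k = CARD('y)"
  define m where "m = CARD('m)"
  define Cb where "Cb = (k - 2) choose (m - 1)"
  define Bb where "Bb = (k - 1) choose m"
  have delc: "del x $ y = f x \<bullet> g y - f' x \<bullet> g' y" for x y
    by (simp add: del_def logits_def)
  have dsum: "(\<Sum>y\<in>UNIV. del x $ y) = 0" for x
  proof -
    have "(\<Sum>y\<in>UNIV. del x $ y) = f x \<bullet> (\<Sum>y\<in>UNIV. g y) - f' x \<bullet> (\<Sum>y\<in>UNIV. g' y)"
      by (simp add: delc sum_subtractf inner_sum_right)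
    then show ?thesis using assms(7,8) unfolding in_Theta_def by simp
  qed
  have Wform: "W yt J x = (\<Sum>j\<in>(UNIV::'m set). (del x $ enum_J J j - del x $ yt)^2)"
    if J: "J \<in> subsets_J yt TYPE('m)" for yt J x
    unfolding W_def norm2_vec zf_def w_formula[OF inv[OF J]] delc by simp
  have ident: "(\<Sum>yt\<in>UNIV. \<Sum>J\<in>subsets_J yt TYPE('m). W yt J x)
      = 2 * real k * real Cb * (norm (del x))^2" for x
  proof -
    have "(\<Sum>yt\<in>UNIV. \<Sum>J\<in>subsets_J yt TYPE('m). W yt J x)
      = (\<Sum>yt\<in>UNIV. \<Sum>J\<in>subsets_J yt TYPE('m). \<Sum>j\<in>(UNIV::'m set). (del x $ enum_J J j - del x $ yt)^2)"
      by (intro sum.cong refl Wform)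
    also have "\<dots> = 2 * real k * real Cb * (\<Sum>y\<in>UNIV. (del x $ y)^2)"
      unfolding k_def Cb_def m_def by (rule comb[OF dsum kge])
    finally show ?thesis by (simp add: norm2_vec)
  qed
  have zm: "zf yt J \<in> borel_measurable px" for yt J
    unfolding zf_def by (intro borel_measurable_diff fm meas_mat f'm)
  have Zm: "Z yt J \<in> borel_measurable px" for yt J
    unfolding Z_def by (rule borel_measurable_continuous_on[OF _ zm]) (intro continuous_intros)
  have Wm: "W yt J \<in> borel_measurable px" for yt J
    unfolding W_def by (rule borel_measurable_continuous_on[OF _ meas_mat[OF zm]]) (intro continuous_intros)
  have Zi: "integrable px (Z yt J)" for yt J
  proof -
    obtain K where K: "\<And>v. norm (Atil g g' yt J *v v) \<le> norm v * K"
      using bounded_linear.bounded[OF matrix_vector_mul_bounded_linear] by blast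
    have bnd: "norm (Z yt J x) \<le> norm (2 * (norm (f x))^2 + 2 * K^2 * (norm (f' x))^2)" for x
    proof -
      have n0: "0 \<le> norm (f' x) * K" using K[of "f' x"] norm_ge_zero order_trans by blast
      have "norm (zf yt J x) \<le> norm (f x) + norm (f' x) * K"
        unfolding zf_def using norm_triangle_ineq4[of "f x" "Atil g g' yt J *v f' x"] K[of "f' x"] by linarith
      then have "(norm (zf yt J x))^2 \<le> (norm (f x) + norm (f' x) * K)^2"
        by (intro power_mono) auto
      also have "\<dots> \<le> 2 * (norm (f x))^2 + 2 * (norm (f' x) * K)^2"
      proof -
        have "0 \<le> (norm (f x) - norm (f' x) * K)^2" by simp
        then show ?thesis by (simp add: power2_eq_square algebra_simps)
      qed
      finally show ?thesis unfolding Z_def by (simp add: power_mult_distrib algebra_simps)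
    qed
    have int: "integrable px (\<lambda>x. 2 * (norm (f x))^2 + 2 * K^2 * (norm (f' x))^2)"
      using fi f'i by simp
    show ?thesis by (rule Bochner_Integration.integrable_bound[OF int Zm AE_I2[OF bnd]])
  qed
  have pw: "smin^2 * Z yt J x \<le> W yt J x \<and> W yt J x \<le> smax^2 * Z yt J x"
    if J: "J \<in> subsets_J yt TYPE('m)" for yt J x
    unfolding Z_def W_def using bounds[OF J] by blast
  have Wi: "integrable px (W yt J)" if J: "J \<in> subsets_J yt TYPE('m)" for yt J
  proof -
    have int: "integrable px (\<lambda>x. smax^2 * Z yt J x)" using Zi by (rule integrable_mult_right)
    have bnd: "norm (W yt J x) \<le> norm (smax^2 * Z yt J x)" for x
      using pw[OF J, of x] unfolding W_def Z_def by simp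
    show ?thesis by (rule Bochner_Integration.integrable_bound[OF int Wm AE_I2[OF bnd]])
  qed
  define P where "P = (\<Sum>yt\<in>UNIV. \<Sum>J\<in>subsets_J yt TYPE('m). integral\<^sup>L px (W yt J))"
  define D where "D = d_logit_sq px f g f' g'"
  have PD: "P = 2 * real k * real Cb * D"
  proof -
    have "integral\<^sup>L px (\<lambda>x. \<Sum>yt\<in>UNIV. \<Sum>J\<in>subsets_J yt TYPE('m). W yt J x)
       = (\<Sum>yt\<in>UNIV. integral\<^sup>L px (\<lambda>x. \<Sum>J\<in>subsets_J yt TYPE('m). W yt J x))"
      by (rule Bochner_Integration.integral_sum) (rule Bochner_Integration.integrable_sum, erule Wi)
    also have "\<dots> = P" unfolding P_def
      by (rule sum.cong[OF refl], rule Bochner_Integration.integral_sum, erule Wi)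
    finally have "P = integral\<^sup>L px (\<lambda>x. \<Sum>yt\<in>UNIV. \<Sum>J\<in>subsets_J yt TYPE('m). W yt J x)" ..
    also have "\<dots> = integral\<^sup>L px (\<lambda>x. 2 * real k * real Cb * (norm (del x))^2)"
      by (simp only: ident)
    also have "\<dots> = 2 * real k * real Cb * D"
      unfolding D_def d_logit_sq_def del_def by (rule integral_mult_right_zero)
    finally show ?thesis .
  qed
  define R where "R = d_rep_sq px f g f' g'"
  have Rdef: "R = (1 / (real k * real Bb)) * (\<Sum>yt\<in>UNIV. \<Sum>J\<in>subsets_J yt TYPE('m). integral\<^sup>L px (Z yt J))"
    unfolding R_def d_rep_sq_def Z_def[abs_def] zf_def[abs_def] k_def Bb_def m_def ..
  have Zle: "integral\<^sup>L px (Z yt J) \<le> integral\<^sup>L px (W yt J) / smin^2"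
    if J: "J \<in> subsets_J yt TYPE('m)" for yt J
  proof -
    have "integral\<^sup>L px (Z yt J) \<le> integral\<^sup>L px (\<lambda>x. W yt J x / smin^2)"
    proof (rule integral_mono[OF Zi integrable_divide[OF Wi[OF J]]])
      fix x show "Z yt J x \<le> W yt J x / smin^2"
        using pw[OF J, of x] sminpos by (simp add: le_divide_eq mult.commute)
    qed
    then show ?thesis by (simp only: integral_divide_zero)
  qed
  have Zge: "integral\<^sup>L px (W yt J) / smax^2 \<le> integral\<^sup>L px (Z yt J)"
    if J: "J \<in> subsets_J yt TYPE('m)" for yt J
  proof -
    have "integral\<^sup>L px (\<lambda>x. W yt J x / smax^2) \<le> integral\<^sup>L px (Z yt J)"
    proof (rule integral_mono[OF integrable_divide[OF Wi[OF J]] Zi])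
      fix x show "W yt J x / smax^2 \<le> Z yt J x"
        using pw[OF J, of x] sminpos sminmax by (simp add: divide_le_eq mult.commute)
    qed
    then show ?thesis by (simp only: integral_divide_zero)
  qed
  have up: "(\<Sum>yt\<in>UNIV. \<Sum>J\<in>subsets_J yt TYPE('m). integral\<^sup>L px (Z yt J)) \<le> P / smin^2"
  proof -
    have "(\<Sum>yt\<in>UNIV. \<Sum>J\<in>subsets_J yt TYPE('m). integral\<^sup>L px (Z yt J))
        \<le> (\<Sum>yt\<in>UNIV. \<Sum>J\<in>subsets_J yt TYPE('m). integral\<^sup>L px (W yt J) / smin^2)"
      by (intro sum_mono Zle)
    also have "\<dots> = P / smin^2" unfolding P_def by (simp only: sum_divide_distrib)
    finally show ?thesis .
  qed
  have lo: "P / smax^2 \<le> (\<Sum>yt\<in>UNIV. \<Sum>J\<in>subsets_J yt TYPE('m). integral\<^sup>L px (Z yt J))"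
  proof -
    have "P / smax^2 = (\<Sum>yt\<in>UNIV. \<Sum>J\<in>subsets_J yt TYPE('m). integral\<^sup>L px (W yt J) / smax^2)"
      unfolding P_def by (simp only: sum_divide_distrib)
    also have "\<dots> \<le> (\<Sum>yt\<in>UNIV. \<Sum>J\<in>subsets_J yt TYPE('m). integral\<^sup>L px (Z yt J))"
      by (intro sum_mono Zge)
    finally show ?thesis .
  qed
  have smaxpos: "smax > 0" using sminpos sminmax by simp
  have D0: "D \<ge> 0" unfolding D_def d_logit_sq_def by (rule Bochner_Integration.integral_nonneg) simp
  have mpos: "m > 0" unfolding m_def by simp
  have mk: "m \<le> k - 1" using kge unfolding m_def k_def by simp
  have Bpos: "Bb > 0" unfolding Bb_def using mk by (rule zero_less_binomial)
  have kpos: "real k - 1 > 0" using kge unfolding k_def using zero_less_card_finite[where ?'a='m] by linarith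
  have binom: "m * Bb = (k - 1) * Cb"
    unfolding Bb_def Cb_def using times_binomial_minus1_eq[OF mpos, of "k - 1"] by (simp add: numeral_2_eq_2)
  have binomR: "real m * real Bb = (real k - 1) * real Cb"
  proof -
    have "real (m * Bb) = real ((k - 1) * Cb)" using binom by simp
    then show ?thesis using kge unfolding k_def by (simp add: of_nat_diff)
  qed
  define C2 where "C2 = 2 * real m / (real k - 1)"
  have key: "(1 / (real k * real Bb)) * P = C2 * D"
  proof -
    have k0: "real k > 0" using kpos by simp
    have "(1 / (real k * real Bb)) * P = 2 * real Cb * D / real Bb"
      unfolding PD using k0 by (simp add: field_simps)
    also have "\<dots> = C2 * D"
    proof -
      have Cbe: "real Cb = real m * real Bb / (real k - 1)" using binomR kpos by (simp add: field_simps)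
      show ?thesis unfolding C2_def Cbe using Bpos kpos by (simp add: field_simps)
    qed
    finally show ?thesis .
  qed
  have C20: "C2 \<ge> 0" unfolding C2_def using kpos by simp
  have Rlo: "C2 * D / smax^2 \<le> R"
  proof -
    have "(1 / (real k * real Bb)) * (P / smax^2) \<le> R"
      unfolding Rdef using lo Bpos by (intro mult_left_mono) auto
    then show ?thesis using key by (metis times_divide_eq_right)
  qed
  have Rup: "R \<le> C2 * D / smin^2"
  proof -
    have "R \<le> (1 / (real k * real Bb)) * (P / smin^2)"
      unfolding Rdef using up Bpos by (intro mult_left_mono) auto
    then show ?thesis using key by (metis times_divide_eq_right)
  qed
  have sq: "sqrt C2 * sqrt D / s = sqrt (C2 * D / s^2)" if "s > 0" for s
    using that by (simp add: real_sqrt_mult real_sqrt_divide)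
  have "sqrt C2 * sqrt D / smax \<le> sqrt R"
    unfolding sq[OF smaxpos] using Rlo by (rule real_sqrt_le_mono)
  moreover have "sqrt R \<le> sqrt C2 * sqrt D / smin"
    unfolding sq[OF sminpos] using Rup by (rule real_sqrt_le_mono)
  ultimately show ?thesis
    unfolding C2_def R_def D_def smin_def smax_def k_def m_def by simp
qed
end
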